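(* If $X$ is a T$_D$ space in which every instance of the McKinsey scheme $\mathrm{M}:\ \Box\Diamond\varphi\to\Diamond\Box\varphi$ is $d$-valid, then $X$ is crowded and openly irresolvable.
   Context: $d$-semantics: a model on a space $X$ is a valuation of propositional variables by subsets of $X$; truth sets interpret Boolean connectives as set operations, $\Diamond\varphi$ as the derived set $\mathrm{d}_X$ (set of limit points: $x$ such that every $O-\{x\}$, $O$ an open neighbourhood of $x$, meets the set) of the truth set of $\varphi$, and $\Box=\neg\Diamond\neg$. A formula is $d$-valid in $X$ if true at every point in every model on $X$. $X$ is T$_D$ if $\mathrm{d}_X\{x\}$ is closed for all $x$; crowded if it has no isolated points. A space is irresolvable if it has no two disjoint non-empty dense subsets; $X$ is openly irresolvable if every non-empty open subspace is irresolvable. *)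

theory Defs
  imports "HOL-Analysis.Analysis"
begin

datatype fm = Var nat | Bot | Neg fm | Conj fm fm | Disj fm fm | Impl fm fm | Dia fm

definition Box :: "fm \<Rightarrow> fm" where
  "Box \<phi> = Neg (Dia (Neg \<phi>))"

fun tset :: "'a topology \<Rightarrow> (nat \<Rightarrow> 'a set) \<Rightarrow> fm \<Rightarrow> 'a set" where
  "tset X V (Var p) = V p \<inter> topspace X"
| "tset X V Bot = {}"
| "tset X V (Neg \<phi>) = topspace X - tset X V \<phi>"
| "tset X V (Conj \<phi> \<psi>) = tset X V \<phi> \<inter> tset X V \<psi>"
| "tset X V (Disj \<phi> \<psi>) = tset X V \<phi> \<union> tset X V \<psi>"
| "tset X V (Impl \<phi> \<psi>) = (topspace X - tset X V \<phi>) \<union> tset X V \<psi>"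
| "tset X V (Dia \<phi>) = X derived_set_of (tset X V \<phi>)"

definition d_valid :: "'a topology \<Rightarrow> fm \<Rightarrow> bool" where
  "d_valid X \<phi> \<longleftrightarrow> (\<forall>V. (\<forall>p. V p \<subseteq> topspace X) \<longrightarrow> tset X V \<phi> = topspace X)"

definition McKinsey :: "fm \<Rightarrow> fm" where
  "McKinsey \<phi> = Impl (Box (Dia \<phi>)) (Dia (Box \<phi>))"

definition T_D :: "'a topology \<Rightarrow> bool" where
  "T_D X \<longleftrightarrow> (\<forall>x\<in>topspace X. closedin X (X derived_set_of {x}))"

definition crowded :: "'a topology \<Rightarrow> bool" where
  "crowded X \<longleftrightarrow> \<not> (\<exists>x\<in>topspace X. openin X {x})"

definition irresolvable :: "'a topology \<Rightarrow> bool" where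
  "irresolvable X \<longleftrightarrow> \<not> (\<exists>A B. A \<subseteq> topspace X \<and> B \<subseteq> topspace X \<and> A \<noteq> {} \<and> B \<noteq> {}
      \<and> A \<inter> B = {} \<and> X closure_of A = topspace X \<and> X closure_of B = topspace X)"

definition openly_irresolvable :: "'a topology \<Rightarrow> bool" where
  "openly_irresolvable X \<longleftrightarrow>
     (\<forall>U. openin X U \<and> U \<noteq> {} \<longrightarrow> irresolvable (subtopology X U))"

end

theory Submission
  imports Defs
begin

lemma mck_at:
  assumes "\<forall>\<phi>. d_valid X (McKinsey \<phi>)" and "A \<subseteq> topspace X" and "x \<in> topspace X"
    and "x \<notin> X derived_set_of (topspace X - X derived_set_of A)"
  shows "x \<in> X derived_set_of (topspace X - X derived_set_of (topspace X - A))"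
proof -
  have "d_valid X (McKinsey (Var 0))" using assms(1) by (rule spec)
  then have "tset X (\<lambda>_. A) (McKinsey (Var 0)) = topspace X"
    using assms(2) unfolding d_valid_def by simp
  then have "x \<in> tset X (\<lambda>_. A) (McKinsey (Var 0))" using assms(3) by blast
  moreover have "A \<inter> topspace X = A" using assms(2) by blast
  ultimately show ?thesis using assms(3,4) by (simp add: McKinsey_def Box_def)
qed

lemma iso_not_derived:
  assumes "openin X {x}" shows "x \<notin> X derived_set_of S"
  using assms by (auto simp: in_derived_set_of)

lemma nbhd_not_derived:
  assumes "openin X U" "x \<in> U" "U - {x} \<subseteq> S"
  shows "x \<notin> X derived_set_of (topspace X - S)"
  using assms by (auto simp: in_derived_set_of)

lemma dense_derived:
  assumes td: "T_D X" and cr: "crowded X" and U: "openin X U" and AU: "A \<subseteq> U"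
    and dense: "U \<subseteq> X closure_of A" and xU: "x \<in> U"
  shows "x \<in> X derived_set_of A"
proof -
  have xt: "x \<in> topspace X" using U xU openin_subset by blast
  have cl: "closedin X (X derived_set_of {x})" using td xt unfolding T_D_def by blast
  have cl2: "closedin X (X closure_of {x})" by simp
  have xnd: "x \<notin> X derived_set_of {x}" by (auto simp: in_derived_set_of)
  show ?thesis unfolding in_derived_set_of
  proof (intro conjI xt allI impI)
    fix W assume O: "x \<in> W \<and> openin X W"
    define G where "G = W \<inter> U \<inter> (topspace X - X derived_set_of {x})"
    have Go: "openin X G" unfolding G_def using O U cl by (intro openin_Int openin_diff) auto
    have xG: "x \<in> G" unfolding G_def using O xU xt xnd by blast
    have "G \<noteq> {x}" using Go cr xt unfolding crowded_def by blast
    then obtain z where zG: "z \<in> G" and zx: "z \<noteq> x" using xG by blast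
    define H where "H = W \<inter> U \<inter> (topspace X - X closure_of {x})"
    have Ho: "openin X H" unfolding H_def using O U cl2 by (intro openin_Int openin_diff) auto
    have "X closure_of {x} = {x} \<union> X derived_set_of {x}" using xt by (simp add: closure_of_alt)
    then have zH: "z \<in> H" using zG zx unfolding G_def H_def by simp
    have "z \<in> X closure_of A" using zH dense unfolding H_def by blast
    then obtain y where yA: "y \<in> A" and yH: "y \<in> H" using zH Ho unfolding in_closure_of by blast
    have xH: "x \<notin> H" unfolding H_def using xt by (simp add: closure_of_alt)
    have "y \<noteq> x" using xH yH by blast
    moreover have "y \<in> W" using yH unfolding H_def by blast
    ultimately show "\<exists>y. y \<noteq> x \<and> y \<in> A \<and> y \<in> W" using yA by blast
  qed
qed

theorem theorem10:
  fixes X :: "'a topology"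
  assumes "T_D X"
    and "\<forall>\<phi>. d_valid X (McKinsey \<phi>)"
  shows "crowded X \<and> openly_irresolvable X"
proof -
  have cr: "crowded X"
    unfolding crowded_def
  proof
    assume "\<exists>x\<in>topspace X. openin X {x}"
    then obtain x where xt: "x \<in> topspace X" and o: "openin X {x}" by blast
    have h: "x \<notin> X derived_set_of (topspace X - X derived_set_of {})"
      by (rule iso_not_derived[OF o])
    have "x \<in> X derived_set_of (topspace X - X derived_set_of (topspace X - {}))"
      by (rule mck_at[OF assms(2) empty_subsetI xt h])
    moreover have "x \<notin> X derived_set_of (topspace X - X derived_set_of (topspace X - {}))"
      by (rule iso_not_derived[OF o])
    ultimately show False by contradiction
  qed
  have oi: "openly_irresolvable X"
    unfolding openly_irresolvable_def irresolvable_def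
  proof (intro allI impI notI)
    fix U assume U: "openin X U \<and> U \<noteq> {}"
    have Uo: "openin X U" using U by (rule conjunct1)
    have Ut: "U \<subseteq> topspace X" using Uo by (rule openin_subset)
    have tU: "topspace (subtopology X U) = U" using Ut by (simp add: Int_absorb1)
    assume "\<exists>A B. A \<subseteq> topspace (subtopology X U) \<and> B \<subseteq> topspace (subtopology X U) \<and> A \<noteq> {} \<and> B \<noteq> {}
      \<and> A \<inter> B = {} \<and> subtopology X U closure_of A = topspace (subtopology X U)
      \<and> subtopology X U closure_of B = topspace (subtopology X U)"
    then obtain A B where AU: "A \<subseteq> U" and BU: "B \<subseteq> U"
      and AB: "A \<inter> B = {}" and cA: "subtopology X U closure_of A = U"
      and cB: "subtopology X U closure_of B = U" unfolding tU by blast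
    have dA: "U \<subseteq> X closure_of A" using cA Uo by (simp add: closure_of_subtopology_open Int_absorb1 inf.absorb_iff1)
    have dB: "U \<subseteq> X closure_of B" using cB Uo by (simp add: closure_of_subtopology_open Int_absorb1 inf.absorb_iff1)
    have DA: "U \<subseteq> X derived_set_of A"
      using dense_derived[OF assms(1) cr Uo AU dA] by blast
    have DB: "U \<subseteq> X derived_set_of B"
      using dense_derived[OF assms(1) cr Uo BU dB] by blast
    obtain x where xU: "x \<in> U" using U by blast
    have xt: "x \<in> topspace X" using xU Ut by blast
    have At: "A \<subseteq> topspace X" using AU Ut by blast
    have h: "x \<notin> X derived_set_of (topspace X - X derived_set_of A)"
      using Uo xU by (rule nbhd_not_derived) (use DA in blast)
    have m: "x \<in> X derived_set_of (topspace X - X derived_set_of (topspace X - A))"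
      by (rule mck_at[OF assms(2) At xt h])
    have "B \<subseteq> topspace X - A" using AB BU Ut by blast
    then have "X derived_set_of B \<subseteq> X derived_set_of (topspace X - A)"
      by (rule derived_set_of_mono)
    then have UD: "U \<subseteq> X derived_set_of (topspace X - A)" using DB by blast
    have n: "x \<notin> X derived_set_of (topspace X - X derived_set_of (topspace X - A))"
      using Uo xU by (rule nbhd_not_derived[where S="X derived_set_of (topspace X - A)"]) (use UD in blast)
    then show False using m by contradiction
  qed
  show ?thesis using cr oi by blast
qed

end
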